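(* Let $\theta>0$ and let $(Z_{ij}: i,j\in\mathbb{Z})$ be a real stationary Gaussian process with mean $\theta$ and covariance kernel $R(i,j)=\mathrm{Cov}(Z_{00},Z_{ij})$ satisfying $\sum_{i,j\in\mathbb{Z}}|R(i,j)|<\infty$ and $\sum_{i,j\in\mathbb{Z}}R(i,j)\neq0$. Let $X_{ij}=Z_{ij}-\theta$, let $W_N$ be the $N\times N$ matrix with entries $W_N(i,j)=X_{ij}+X_{ji}$, $1\le i,j\le N$, and let $\mathbf{1}_N$ be the column vector of length $N$ with all entries $1$. Then, as $N\to\infty$, $$N^{-2}\,\mathbf{1}_N' W_N^2\mathbf{1}_N \xrightarrow{P} 2\alpha\theta,\qquad\text{where }\alpha=\frac{1}{2\theta}\sum_{i=-\infty}^{\infty}\big(R(i,0)+R(0,i)\big).$$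
   Context: Stationarity means the law of the process is invariant under shifts of the index set $\mathbb{Z}^2$, so $\mathrm{Cov}(Z_{ij},Z_{kl})=R(k-i,l-j)$. $\xrightarrow{P}$ denotes convergence in probability. *)

theory Defs
  imports "HOL-Probability.Probability"
begin

definition gaussian_rv :: "'a measure \<Rightarrow> ('a \<Rightarrow> real) \<Rightarrow> bool" where
  "gaussian_rv M X \<longleftrightarrow>
     (\<exists>\<mu> \<sigma>. \<sigma> > 0 \<and> distributed M lborel X (normal_density \<mu> \<sigma>))
     \<or> (X \<in> borel_measurable M \<and> (\<exists>c. AE \<omega> in M. X \<omega> = c))"

definition gaussian_process :: "'a measure \<Rightarrow> ('i \<Rightarrow> 'a \<Rightarrow> real) \<Rightarrow> bool" where
  "gaussian_process M Z \<longleftrightarrow>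
     (\<forall>i. Z i \<in> borel_measurable M) \<and>
     (\<forall>S c. finite S \<longrightarrow> gaussian_rv M (\<lambda>\<omega>. \<Sum>s\<in>S. c s * Z s \<omega>))"

definition stationary2 :: "'a measure \<Rightarrow> (int \<times> int \<Rightarrow> 'a \<Rightarrow> real) \<Rightarrow> bool" where
  "stationary2 M Z \<longleftrightarrow>
     (\<forall>a b. distr M (PiM UNIV (\<lambda>_. borel)) (\<lambda>\<omega> p. Z (fst p + a, snd p + b) \<omega>)
          = distr M (PiM UNIV (\<lambda>_. borel)) (\<lambda>\<omega> p. Z p \<omega>))"

definition conv_in_prob :: "'a measure \<Rightarrow> (nat \<Rightarrow> 'a \<Rightarrow> real) \<Rightarrow> real \<Rightarrow> bool" where
  "conv_in_prob M Y c \<longleftrightarrow>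
     (\<forall>\<epsilon>>0. (\<lambda>n. measure M {\<omega> \<in> space M. \<bar>Y n \<omega> - c\<bar> > \<epsilon>}) \<longlonglongrightarrow> 0)"

end

theory Submission
  imports Defs
begin


lemma gauss_moments:
  assumes P: "prob_space M" and G: "gaussian_rv M Y"
  shows "integrable M Y \<and> (\<forall>k. integrable M (\<lambda>\<omega>. (Y \<omega> - integral\<^sup>L M Y)^k)) \<and>
         integral\<^sup>L M (\<lambda>\<omega>. (Y \<omega> - integral\<^sup>L M Y)^4) = 3 * (integral\<^sup>L M (\<lambda>\<omega>. (Y \<omega> - integral\<^sup>L M Y)^2))^2"
proof -
  interpret prob_space M by fact
  show ?thesis
  proof (cases "\<exists>\<mu> \<sigma>. \<sigma> > 0 \<and> distributed M lborel Y (normal_density \<mu> \<sigma>)")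
    case True
    then obtain \<mu> \<sigma> where s: "\<sigma> > 0" and D: "distributed M lborel Y (normal_density \<mu> \<sigma>)" by blast
    have E: "expectation Y = \<mu>" using normal_distributed_expectation[OF s D] .
    have I: "integrable M (\<lambda>\<omega>. (Y \<omega> - \<mu>)^k)" for k
      using distributed_integrable[OF D, of "\<lambda>x. (x - \<mu>)^k"] integrable_normal_moment[OF s, of \<mu> k] by simp
    have J: "integral\<^sup>L M (\<lambda>\<omega>. (Y \<omega> - \<mu>)^(2*k)) = fact (2 * k) / ((2 / \<sigma>\<^sup>2)^k * fact k)" for k
      using distributed_integral[OF D, of "\<lambda>x. (x - \<mu>)^(2*k)"] integral_normal_moment_even[OF s, of \<mu> k] by simp
    have IY: "integrable M Y"
      using distributed_integrable_var[OF D] integrable_normal_moment_nz_1[OF s] by simp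
    have J2: "integral\<^sup>L M (\<lambda>\<omega>. (Y \<omega> - \<mu>)^2) = \<sigma>^2" using J[of 1] by simp
    have J4: "integral\<^sup>L M (\<lambda>\<omega>. (Y \<omega> - \<mu>)^4) = 3 * \<sigma>^4" using J[of 2] s
      by (simp add: fact_numeral field_simps power2_eq_square eval_nat_numeral)
    show ?thesis using IY I J2 J4 E by (simp add: power_mult[symmetric])
  next
    case False
    then have m: "Y \<in> borel_measurable M" and c: "\<exists>c. AE \<omega> in M. Y \<omega> = c" using G unfolding gaussian_rv_def by auto
    then obtain c where c: "AE \<omega> in M. Y \<omega> = c" by blast
    have IY: "integrable M Y" by (rule integrable_cong_AE_imp[of _ "\<lambda>_. c", OF _ m]) (use c in \<open>auto elim: AE_mp\<close>)
    have EY: "expectation Y = c" proof - have "expectation Y = expectation (\<lambda>_. c)" using c m by (intro integral_cong_AE) auto then show ?thesis using prob_space.prob_space[OF P] by simp qed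
    have Z: "AE \<omega> in M. (Y \<omega> - expectation Y)^k = (0::real)" if "k > 0" for k::nat
      using c by (auto simp: EY that)
    have I: "integrable M (\<lambda>\<omega>. (Y \<omega> - expectation Y)^k)" for k
    proof (cases "k = 0")
      case True then show ?thesis by simp
    next
      case False
      have mk: "(\<lambda>\<omega>. (Y \<omega> - expectation Y)^k) \<in> borel_measurable M" using m by measurable
      have ae: "AE \<omega> in M. 0 = (Y \<omega> - expectation Y)^k" using Z[of k] False by (auto elim: AE_mp)
      show ?thesis by (rule integrable_cong_AE_imp[OF _ mk ae]) simp
    qed
    have Ek: "expectation (\<lambda>\<omega>. (Y \<omega> - expectation Y)^k) = 0" if "k>0" for k::nat
      using integral_cong_AE[of "\<lambda>\<omega>. (Y \<omega> - expectation Y)^k" M "\<lambda>_. 0"] Z[OF that] m by simp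
    show ?thesis using IY I Ek[of 2] Ek[of 4] by simp
  qed
qed



locale gsetup = prob_space M for M :: "'a measure" +
  fixes Z :: "int \<times> int \<Rightarrow> 'a \<Rightarrow> real" and \<theta> :: real and R :: "int \<Rightarrow> int \<Rightarrow> real"
  assumes gp: "gaussian_process M Z"
    and st: "stationary2 M Z"
    and mean: "\<And>i j. expectation (Z (i, j)) = \<theta>"
    and Rdef: "\<And>i j. R i j = expectation (\<lambda>\<omega>. (Z (0, 0) \<omega> - \<theta>) * (Z (i, j) \<omega> - \<theta>))"
begin

definition cglin :: "('a \<Rightarrow> real) \<Rightarrow> bool" where
  "cglin Y \<longleftrightarrow> (\<exists>S c. finite S \<and> Y = (\<lambda>\<omega>. \<Sum>s\<in>S. c s * (Z s \<omega> - \<theta>)))"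

lemma Zrv[measurable]: "Z p \<in> borel_measurable M"
  using gp unfolding gaussian_process_def by blast

lemma Zgauss: "gaussian_rv M (\<lambda>\<omega>. \<Sum>s\<in>S. c s * Z s \<omega>)" if "finite S"
  using gp that unfolding gaussian_process_def by (elim conjE allE impE)

lemma Zint: "integrable M (Z p)"
proof -
  have "gaussian_rv M (\<lambda>\<omega>. \<Sum>s\<in>{p}. 1 * Z s \<omega>)"
    by (rule Zgauss) simp
  then have g: "gaussian_rv M (Z p)" by simp
  show ?thesis using gauss_moments[OF prob_space_axioms g] by (elim conjE)
qed

lemma meanp: "expectation (Z p) = \<theta>"
  using mean[of "fst p" "snd p"] by simp

lemma cglin_props:
  assumes "cglin Y"
  shows "Y \<in> borel_measurable M \<and> integrable M (\<lambda>\<omega>. (Y \<omega>)^2) \<and> integrable M (\<lambda>\<omega>. (Y \<omega>)^4) \<and>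
         expectation (\<lambda>\<omega>. (Y \<omega>)^4) = 3 * (expectation (\<lambda>\<omega>. (Y \<omega>)^2))^2"
proof -
  obtain S c where S: "finite S" and Y: "Y = (\<lambda>\<omega>. \<Sum>s\<in>S. c s * (Z s \<omega> - \<theta>))"
    using assms unfolding cglin_def by blast
  define G where "G = (\<lambda>\<omega>. \<Sum>s\<in>S. c s * Z s \<omega>)"
  have GG: "gaussian_rv M G" unfolding G_def by (rule Zgauss[OF S])
  have EG: "expectation G = (\<Sum>s\<in>S. c s * \<theta>)"
  proof -
    have "expectation G = (\<Sum>s\<in>S. expectation (\<lambda>\<omega>. c s * Z s \<omega>))"
      unfolding G_def by (rule Bochner_Integration.integral_sum[where f="\<lambda>s \<omega>. c s * Z s \<omega>"]) (simp add: Zint)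
    then show ?thesis by (simp add: meanp)
  qed
  have YG: "Y = (\<lambda>\<omega>. G \<omega> - expectation G)"
    unfolding Y EG unfolding G_def by (auto simp: sum_subtractf right_diff_distrib)
  have m: "Y \<in> borel_measurable M" unfolding Y by measurable
  have gm: "integrable M G \<and> (\<forall>k. integrable M (\<lambda>\<omega>. (G \<omega> - expectation G)^k)) \<and>
         expectation (\<lambda>\<omega>. (G \<omega> - expectation G)^4) = 3 * (expectation (\<lambda>\<omega>. (G \<omega> - expectation G)^2))^2"
    by (rule gauss_moments[OF prob_space_axioms GG])
  show ?thesis unfolding YG using m gm unfolding YG by simp
qed

lemma cglin_X: "cglin (\<lambda>\<omega>. Z p \<omega> - \<theta>)"
  unfolding cglin_def by (rule exI[of _ "{p}"], rule exI[of _ "\<lambda>_. 1"]) simp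

lemma cglin_zero: "cglin (\<lambda>\<omega>. 0)"
  unfolding cglin_def by (rule exI[of _ "{}"]) simp

lemma cglin_cmult: "cglin Y \<Longrightarrow> cglin (\<lambda>\<omega>. b * Y \<omega>)"
  unfolding cglin_def
  apply clarify
  subgoal for S c by (rule exI[of _ S], rule exI[of _ "\<lambda>s. b * c s"]) (simp add: sum_distrib_left mult.assoc)
  done

lemma cglin_add:
  assumes "cglin Y1" "cglin Y2" shows "cglin (\<lambda>\<omega>. Y1 \<omega> + Y2 \<omega>)"
proof -
  obtain S1 c1 where S1: "finite S1" and Y1: "Y1 = (\<lambda>\<omega>. \<Sum>s\<in>S1. c1 s * (Z s \<omega> - \<theta>))"
    using assms(1) unfolding cglin_def by blast
  obtain S2 c2 where S2: "finite S2" and Y2: "Y2 = (\<lambda>\<omega>. \<Sum>s\<in>S2. c2 s * (Z s \<omega> - \<theta>))"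
    using assms(2) unfolding cglin_def by blast
  define c where "c s = (if s \<in> S1 then c1 s else 0) + (if s \<in> S2 then c2 s else 0)" for s
  have "(\<Sum>s\<in>S1\<union>S2. c s * (Z s \<omega> - \<theta>)) = Y1 \<omega> + Y2 \<omega>" for \<omega>
  proof -
    have "(\<Sum>s\<in>S1\<union>S2. c s * (Z s \<omega> - \<theta>)) =
       (\<Sum>s\<in>S1\<union>S2. (if s \<in> S1 then c1 s * (Z s \<omega> - \<theta>) else 0)) +
       (\<Sum>s\<in>S1\<union>S2. (if s \<in> S2 then c2 s * (Z s \<omega> - \<theta>) else 0))"
    proof -
      have "c s * (Z s \<omega> - \<theta>) = (if s \<in> S1 then c1 s * (Z s \<omega> - \<theta>) else 0) + (if s \<in> S2 then c2 s * (Z s \<omega> - \<theta>) else 0)" for s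
        unfolding c_def by (simp add: distrib_right)
      then show ?thesis by (simp add: sum.distrib)
    qed
    also have "\<dots> = (\<Sum>s\<in>(S1\<union>S2) \<inter> S1. c1 s * (Z s \<omega> - \<theta>)) + (\<Sum>s\<in>(S1\<union>S2) \<inter> S2. c2 s * (Z s \<omega> - \<theta>))"
      using S1 S2 by (simp only: sum.inter_restrict[of "S1 \<union> S2"] finite_Un)
    also have "\<dots> = Y1 \<omega> + Y2 \<omega>" unfolding Y1 Y2
      by (simp add: Int_absorb1)
    finally show ?thesis .
  qed
  then show ?thesis unfolding cglin_def using S1 S2 by (intro exI[of _ "S1 \<union> S2"] exI[of _ c]) auto
qed

lemma cglin_sum:
  assumes "finite I" "\<And>i. i \<in> I \<Longrightarrow> cglin (Y i)"
  shows "cglin (\<lambda>\<omega>. \<Sum>i\<in>I. Y i \<omega>)"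
  using assms
proof (induction I rule: finite_induct)
  case empty then show ?case using cglin_zero by simp
next
  case (insert x F) then show ?case using cglin_add[of "Y x" "\<lambda>\<omega>. \<Sum>i\<in>F. Y i \<omega>"] by simp
qed

lemma cglin_diff: "cglin Y1 \<Longrightarrow> cglin Y2 \<Longrightarrow> cglin (\<lambda>\<omega>. Y1 \<omega> - Y2 \<omega>)"
  using cglin_add[of Y1 "\<lambda>\<omega>. (-1) * Y2 \<omega>"] cglin_cmult[of Y2 "-1"] by simp

end


context gsetup begin

lemma Q4:
  assumes ca: "cglin a" and cb: "cglin b"
  shows "integrable M (\<lambda>\<omega>. a \<omega> * b \<omega>) \<and> integrable M (\<lambda>\<omega>. (a \<omega>)^2 * (b \<omega>)^2) \<and>
    expectation (\<lambda>\<omega>. (a \<omega>)^2 * (b \<omega>)^2) =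
      expectation (\<lambda>\<omega>. (a \<omega>)^2) * expectation (\<lambda>\<omega>. (b \<omega>)^2) + 2 * (expectation (\<lambda>\<omega>. a \<omega> * b \<omega>))^2"
proof -
  define p where "p = (\<lambda>\<omega>. a \<omega> + b \<omega>)"
  define m where "m = (\<lambda>\<omega>. a \<omega> - b \<omega>)"
  have cp: "cglin p" unfolding p_def by (rule cglin_add[OF ca cb])
  have cm: "cglin m" unfolding m_def by (rule cglin_diff[OF ca cb])
  note A = cglin_props[OF ca] and B = cglin_props[OF cb] and P = cglin_props[OF cp] and Mm = cglin_props[OF cm]
  have ab: "(\<lambda>\<omega>. a \<omega> * b \<omega>) = (\<lambda>\<omega>. ((p \<omega>)^2 - (a \<omega>)^2 - (b \<omega>)^2) / 2)"
    unfolding p_def by (auto simp: power2_eq_square field_simps)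
  have iab: "integrable M (\<lambda>\<omega>. a \<omega> * b \<omega>)" unfolding ab using A B P by auto
  have a2b2: "(\<lambda>\<omega>. (a \<omega>)^2 * (b \<omega>)^2) = (\<lambda>\<omega>. ((p \<omega>)^4 + (m \<omega>)^4 - 2 * (a \<omega>)^4 - 2 * (b \<omega>)^4) / 12)"
    unfolding p_def m_def by (auto simp: eval_nat_numeral field_simps)
  have i22: "integrable M (\<lambda>\<omega>. (a \<omega>)^2 * (b \<omega>)^2)" unfolding a2b2 using A B P Mm by auto
  define EA where "EA = expectation (\<lambda>\<omega>. (a \<omega>)^2)"
  define EB where "EB = expectation (\<lambda>\<omega>. (b \<omega>)^2)"
  define C where "C = expectation (\<lambda>\<omega>. a \<omega> * b \<omega>)"
  have "(\<lambda>\<omega>. (p \<omega>)^2) = (\<lambda>\<omega>. (a \<omega>)^2 + (b \<omega>)^2 + 2 * (a \<omega> * b \<omega>))"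
    unfolding p_def by (auto simp: power2_eq_square field_simps)
  then have Ep: "expectation (\<lambda>\<omega>. (p \<omega>)^2) = EA + EB + 2 * C"
    unfolding EA_def EB_def C_def using A B iab by simp
  have "(\<lambda>\<omega>. (m \<omega>)^2) = (\<lambda>\<omega>. (a \<omega>)^2 + (b \<omega>)^2 - 2 * (a \<omega> * b \<omega>))"
    unfolding m_def by (auto simp: power2_eq_square field_simps)
  then have Em: "expectation (\<lambda>\<omega>. (m \<omega>)^2) = EA + EB - 2 * C"
    unfolding EA_def EB_def C_def using A B iab by simp
  have "expectation (\<lambda>\<omega>. (a \<omega>)^2 * (b \<omega>)^2) =
     (expectation (\<lambda>\<omega>. (p \<omega>)^4) + expectation (\<lambda>\<omega>. (m \<omega>)^4) - 2 * expectation (\<lambda>\<omega>. (a \<omega>)^4) - 2 * expectation (\<lambda>\<omega>. (b \<omega>)^4)) / 12"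
    unfolding a2b2 using A B P Mm by simp
  also have "\<dots> = (3 * (EA + EB + 2 * C)^2 + 3 * (EA + EB - 2 * C)^2 - 6 * EA^2 - 6 * EB^2) / 12"
    using A B P Mm Ep Em unfolding EA_def EB_def by simp
  also have "\<dots> = EA * EB + 2 * C^2" by (simp add: power2_eq_square field_simps)
  finally show ?thesis using iab i22 unfolding EA_def EB_def C_def by simp
qed

end


context gsetup begin

lemma shift_meas: "(\<lambda>\<omega> p'. Z (fst p' + a, snd p' + b) \<omega>) \<in> measurable M (PiM UNIV (\<lambda>_. borel))"
  by (rule measurable_PiM_single'[where f="\<lambda>p' \<omega>. Z (fst p' + a, snd p' + b) \<omega>"]) auto

lemma cov: "expectation (\<lambda>\<omega>. (Z p \<omega> - \<theta>) * (Z q \<omega> - \<theta>)) = R (fst q - fst p) (snd q - snd p)"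
proof -
  define a where "a = fst p"
  define b where "b = snd p"
  define g where "g = (\<lambda>x::int\<times>int\<Rightarrow>real. (x (0,0) - \<theta>) * (x (fst q - a, snd q - b) - \<theta>))"
  have gm: "g \<in> borel_measurable (PiM UNIV (\<lambda>_. borel))" unfolding g_def by measurable
  have e: "distr M (PiM UNIV (\<lambda>_. borel)) (\<lambda>\<omega> p'. Z (fst p' + a, snd p' + b) \<omega>)
          = distr M (PiM UNIV (\<lambda>_. borel)) (\<lambda>\<omega> p'. Z p' \<omega>)"
    using st unfolding stationary2_def by blast
  have m0: "(\<lambda>\<omega> p'. Z p' \<omega>) \<in> measurable M (PiM UNIV (\<lambda>_. borel))"
    using shift_meas[of 0 0] by simp
  have "expectation (\<lambda>\<omega>. (Z p \<omega> - \<theta>) * (Z q \<omega> - \<theta>)) =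
        integral\<^sup>L (distr M (PiM UNIV (\<lambda>_. borel)) (\<lambda>\<omega> p'. Z (fst p' + a, snd p' + b) \<omega>)) g"
    by (subst integral_distr[OF shift_meas gm]) (simp add: g_def a_def b_def)
  also have "\<dots> = integral\<^sup>L (distr M (PiM UNIV (\<lambda>_. borel)) (\<lambda>\<omega> p'. Z p' \<omega>)) g" by (simp only: e)
  also have "\<dots> = R (fst q - fst p) (snd q - snd p)"
    by (subst integral_distr[OF m0 gm]) (simp add: g_def a_def b_def Rdef)
  finally show ?thesis .
qed

end


context gsetup begin

definition SS :: "nat \<Rightarrow> nat \<Rightarrow> 'a \<Rightarrow> real" where
  "SS N k \<omega> = (\<Sum>i\<in>{1..N}. (Z (int i, int k) \<omega> - \<theta>) + (Z (int k, int i) \<omega> - \<theta>))"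

definition QQ :: "nat \<Rightarrow> 'a \<Rightarrow> real" where
  "QQ N \<omega> = (\<Sum>k\<in>{1..N}. (SS N k \<omega>)^2)"

definition cc :: "nat \<Rightarrow> nat \<Rightarrow> nat \<Rightarrow> real" where
  "cc N k l = expectation (\<lambda>\<omega>. SS N k \<omega> * SS N l \<omega>)"

lemma cglin_SS: "cglin (SS N k)"
proof -
  have "cglin (\<lambda>\<omega>. \<Sum>i\<in>{1..N}. (Z (int i, int k) \<omega> - \<theta>) + (Z (int k, int i) \<omega> - \<theta>))"
    by (rule cglin_sum) (simp, rule cglin_add[OF cglin_X cglin_X])
  then show ?thesis unfolding SS_def[abs_def] by simp
qed

lemma intXX: "integrable M (\<lambda>\<omega>. (Z p \<omega> - \<theta>) * (Z q \<omega> - \<theta>))"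
  by (rule conjunct1[OF Q4[OF cglin_X[of p] cglin_X[of q]]])

lemma int_SS2: "integrable M (\<lambda>\<omega>. SS N k \<omega> * SS N l \<omega>)"
  by (rule conjunct1[OF Q4[OF cglin_SS[of N k] cglin_SS[of N l]]])

lemma int_SS22: "integrable M (\<lambda>\<omega>. (SS N k \<omega>)^2 * (SS N l \<omega>)^2)"
  by (rule conjunct1[OF conjunct2[OF Q4[OF cglin_SS[of N k] cglin_SS[of N l]]]])

lemma E_SS22: "expectation (\<lambda>\<omega>. (SS N k \<omega>)^2 * (SS N l \<omega>)^2) = cc N k k * cc N l l + 2 * (cc N k l)^2"
  using Q4[OF cglin_SS[of N k] cglin_SS[of N l]] unfolding cc_def by (simp add: power2_eq_square)

lemma QQ_int: "integrable M (QQ N)"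
  unfolding QQ_def[abs_def] using int_SS2 by (simp add: power2_eq_square)

lemma E_QQ: "expectation (QQ N) = (\<Sum>k\<in>{1..N}. cc N k k)"
proof -
  have "expectation (QQ N) = (\<Sum>k\<in>{1..N}. expectation (\<lambda>\<omega>. SS N k \<omega> * SS N k \<omega>))"
    unfolding QQ_def[abs_def] power2_eq_square
    by (rule Bochner_Integration.integral_sum[where f="\<lambda>k \<omega>. SS N k \<omega> * SS N k \<omega>"]) (rule int_SS2)
  then show ?thesis unfolding cc_def .
qed

lemma QQ2_eq: "(QQ N \<omega>)^2 = (\<Sum>k\<in>{1..N}. \<Sum>l\<in>{1..N}. (SS N k \<omega>)^2 * (SS N l \<omega>)^2)"
  unfolding QQ_def power2_eq_square[of "sum _ _"] by (simp add: sum_product)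

lemma QQ2_int: "integrable M (\<lambda>\<omega>. (QQ N \<omega>)^2)"
  unfolding QQ2_eq using int_SS22 by simp

lemma E_QQ2: "expectation (\<lambda>\<omega>. (QQ N \<omega>)^2) = (expectation (QQ N))^2 + 2 * (\<Sum>k\<in>{1..N}. \<Sum>l\<in>{1..N}. (cc N k l)^2)"
proof -
  have "expectation (\<lambda>\<omega>. (QQ N \<omega>)^2) = (\<Sum>k\<in>{1..N}. \<Sum>l\<in>{1..N}. expectation (\<lambda>\<omega>. (SS N k \<omega>)^2 * (SS N l \<omega>)^2))"
    unfolding QQ2_eq
    apply (subst Bochner_Integration.integral_sum[where f="\<lambda>k \<omega>. \<Sum>l\<in>{1..N}. (SS N k \<omega>)^2 * (SS N l \<omega>)^2"])
     apply (simp add: int_SS22)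
    apply (rule sum.cong[OF refl])
    apply (rule Bochner_Integration.integral_sum[where f="\<lambda>l \<omega>. (SS N k \<omega>)^2 * (SS N l \<omega>)^2" for k])
    apply (rule int_SS22)
    done
  also have "\<dots> = (\<Sum>k\<in>{1..N}. \<Sum>l\<in>{1..N}. cc N k k * cc N l l + 2 * (cc N k l)^2)"
    by (simp add: E_SS22)
  also have "\<dots> = (\<Sum>k\<in>{1..N}. cc N k k)^2 + 2 * (\<Sum>k\<in>{1..N}. \<Sum>l\<in>{1..N}. (cc N k l)^2)"
    by (simp add: sum.distrib sum_distrib_left power2_eq_square sum_product sum_distrib_right mult.commute)
  finally show ?thesis by (simp add: E_QQ)
qed

lemma cc_formula: "cc N k l = (\<Sum>i\<in>{1..N}. \<Sum>j\<in>{1..N}.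
   R (int j - int i) (int l - int k) + R (int l - int i) (int j - int k) +
   R (int j - int k) (int l - int i) + R (int l - int k) (int j - int i))"
proof -
  define X where "X p \<omega> = Z p \<omega> - \<theta>" for p \<omega>
  have iX: "integrable M (\<lambda>\<omega>. X p \<omega> * X q \<omega>)" for p q unfolding X_def by (rule intXX)
  have eX: "expectation (\<lambda>\<omega>. X p \<omega> * X q \<omega>) = R (fst q - fst p) (snd q - snd p)" for p q unfolding X_def by (rule cov)
  have pw: "SS N k \<omega> * SS N l \<omega> = (\<Sum>i\<in>{1..N}. \<Sum>j\<in>{1..N}.
     X (int i, int k) \<omega> * X (int j, int l) \<omega> + X (int i, int k) \<omega> * X (int l, int j) \<omega> +
     X (int k, int i) \<omega> * X (int j, int l) \<omega> + X (int k, int i) \<omega> * X (int l, int j) \<omega>)" for \<omega>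
    unfolding SS_def X_def sum_product by (simp add: algebra_simps)
  have "cc N k l = (\<Sum>i\<in>{1..N}. \<Sum>j\<in>{1..N}. expectation (\<lambda>\<omega>.
     X (int i, int k) \<omega> * X (int j, int l) \<omega> + X (int i, int k) \<omega> * X (int l, int j) \<omega> +
     X (int k, int i) \<omega> * X (int j, int l) \<omega> + X (int k, int i) \<omega> * X (int l, int j) \<omega>))"
    unfolding cc_def pw
    apply (subst Bochner_Integration.integral_sum)
     apply (simp add: iX)
    apply (rule sum.cong[OF refl])
    apply (rule Bochner_Integration.integral_sum)
    apply (simp add: iX)
    done
  also have "\<dots> = (\<Sum>i\<in>{1..N}. \<Sum>j\<in>{1..N}.
   R (int j - int i) (int l - int k) + R (int l - int i) (int j - int k) +
   R (int j - int k) (int l - int i) + R (int l - int k) (int j - int i))"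
    by (simp add: iX eX)
  finally show ?thesis .
qed

end


lemma cesaro_int:
  fixes f :: "int \<Rightarrow> real"
  assumes hs: "(f has_sum F) UNIV" and bd: "\<And>D. finite D \<Longrightarrow> \<bar>\<Sum>m\<in>D. f m\<bar> \<le> B"
  shows "(\<lambda>N. (\<Sum>i\<in>{1..N}. \<Sum>j\<in>{1..N}. f (int j - int i)) / real N) \<longlonglongrightarrow> F"
proof (rule LIMSEQ_I)
  fix \<epsilon> :: real assume ep: "\<epsilon> > 0"
  have "eventually (\<lambda>D. dist (sum f D) F < \<epsilon>/2) (finite_subsets_at_top UNIV)"
  proof -
    have T: "\<forall>e>0. eventually (\<lambda>D. dist (sum f D) F < e) (finite_subsets_at_top UNIV)"
      using hs unfolding has_sum_def tendsto_iff by simp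
    have "\<epsilon>/2 > 0" using ep by simp
    then show ?thesis using T by (elim allE[of _ "\<epsilon>/2"] impE)
  qed
  then obtain D0 where D0: "finite D0" and D0p: "\<And>D. finite D \<Longrightarrow> D0 \<subseteq> D \<Longrightarrow> dist (sum f D) F < \<epsilon>/2"
    unfolding eventually_finite_subsets_at_top by auto
  define K where "K = nat (Max (insert 0 (abs ` D0)))"
  have K: "\<bar>m\<bar> \<le> int K" if "m \<in> D0" for m
  proof -
    have "\<bar>m\<bar> \<le> Max (insert 0 (abs ` D0))" using D0 that by (intro Max_ge) auto
    moreover have "0 \<le> Max (insert 0 (abs ` D0))" using D0 by (intro Max_ge) auto
    ultimately show ?thesis unfolding K_def by simp
  qed
  define C where "C = B + \<bar>F\<bar>"
  have B0: "B \<ge> 0" using bd[of "{}"] by simp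
  have C0: "C \<ge> 0" unfolding C_def using B0 by simp
  obtain N0 :: nat where N0: "real N0 > 4 * real K * C / \<epsilon>" using reals_Archimedean2 by blast
  show "\<exists>no. \<forall>n\<ge>no. norm ((\<Sum>i\<in>{1..n}. \<Sum>j\<in>{1..n}. f (int j - int i)) / real n - F) < \<epsilon>"
  proof (intro exI[of _ "Suc N0"] allI impI)
    fix N :: nat assume NN: "N \<ge> Suc N0"
    then have Npos: "real N > 0" by simp
    define S where "S i = (\<Sum>j\<in>{1..N}. f (int j - int i))" for i :: nat
    define bad where "bad = {i\<in>{1..N}. \<not> (K < i \<and> i + K \<le> N)}"
    have Si: "\<bar>S i - F\<bar> \<le> \<epsilon>/2 + (if i \<in> bad then C else 0)" if i: "i \<in> {1..N}" for i
    proof -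
      define Di where "Di = (\<lambda>j. int j - int i) ` {1..N}"
      have inj: "inj_on (\<lambda>j. int j - int i) {1..N}" by (auto simp: inj_on_def)
      have SD: "S i = sum f Di" unfolding S_def Di_def by (subst sum.reindex[OF inj]) (simp add: o_def)
      have fD: "finite Di" unfolding Di_def by simp
      show ?thesis
      proof (cases "i \<in> bad")
        case True
        have "\<bar>S i - F\<bar> \<le> \<bar>S i\<bar> + \<bar>F\<bar>" by simp
        also have "\<dots> \<le> C" unfolding C_def SD using bd[OF fD] by simp
        finally show ?thesis using True ep by simp
      next
        case False
        then have g: "K < i" "i + K \<le> N" using i unfolding bad_def by auto
        have "D0 \<subseteq> Di"
        proof
          fix m assume m: "m \<in> D0"
          have mK: "\<bar>m\<bar> \<le> int K" by (rule K[OF m])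
          define j where "j = nat (m + int i)"
          have "int j = m + int i" unfolding j_def using mK g by simp
          moreover have "j \<in> {1..N}" unfolding j_def using mK g by auto
          ultimately show "m \<in> Di" unfolding Di_def by (intro image_eqI[of _ _ j]) auto
        qed
        then have "dist (sum f Di) F < \<epsilon>/2" by (rule D0p[OF fD])
        then show ?thesis using False SD by (simp add: dist_real_def)
      qed
    qed
    have cb: "card bad \<le> 2 * K"
    proof -
      have "bad \<subseteq> {1..K} \<union> {N + 1 - K..N}" unfolding bad_def by auto
      then have "card bad \<le> card ({1..K} \<union> {N + 1 - K..N})" by (intro card_mono) auto
      also have "\<dots> \<le> card {1..K} + card {N + 1 - K..N}" by (rule card_Un_le)
      also have "\<dots> \<le> 2 * K" by simp
      finally show ?thesis .
    qed
    have "\<bar>(\<Sum>i\<in>{1..N}. S i) - real N * F\<bar> = \<bar>\<Sum>i\<in>{1..N}. (S i - F)\<bar>"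
      by (simp add: sum_subtractf)
    also have "\<dots> \<le> (\<Sum>i\<in>{1..N}. \<bar>S i - F\<bar>)" by (rule sum_abs)
    also have "\<dots> \<le> (\<Sum>i\<in>{1..N}. \<epsilon>/2 + (if i \<in> bad then C else 0))"
      by (rule sum_mono) (rule Si)
    also have "\<dots> = real N * (\<epsilon>/2) + C * real (card bad)"
    proof -
      have "(\<Sum>i\<in>{1..N}. (if i \<in> bad then C else 0)) = (\<Sum>i\<in>{1..N} \<inter> bad. C)"
        by (rule sum.inter_restrict[symmetric]) simp
      also have "{1..N} \<inter> bad = bad" unfolding bad_def by auto
      finally show ?thesis by (simp add: sum.distrib)
    qed
    also have "\<dots> \<le> real N * (\<epsilon>/2) + C * (2 * real K)"
      using cb C0 by (intro add_left_mono mult_left_mono) auto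
    also have "\<dots> < real N * \<epsilon>"
    proof -
      have "4 * real K * C / \<epsilon> < real N" using N0 NN by simp
      then have "4 * real K * C < real N * \<epsilon>" using ep by (simp add: field_simps)
      then show ?thesis by (simp add: algebra_simps)
    qed
    finally have "\<bar>(\<Sum>i\<in>{1..N}. S i) - real N * F\<bar> < real N * \<epsilon>" .
    then have "\<bar>(\<Sum>i\<in>{1..N}. S i) / real N - F\<bar> < \<epsilon>"
      using Npos by (simp add: field_simps abs_divide)
    then show "norm ((\<Sum>i\<in>{1..N}. \<Sum>j\<in>{1..N}. f (int j - int i)) / real N - F) < \<epsilon>"
      unfolding S_def by simp
  qed
qed



definition ccf :: "(int \<Rightarrow> int \<Rightarrow> real) \<Rightarrow> nat \<Rightarrow> nat \<Rightarrow> nat \<Rightarrow> real" where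
  "ccf R N k l = (\<Sum>i\<in>{1..N}. \<Sum>j\<in>{1..N}.
   R (int j - int i) (int l - int k) + R (int l - int i) (int j - int k) +
   R (int j - int k) (int l - int i) + R (int l - int k) (int j - int i))"

context
  fixes R :: "int \<Rightarrow> int \<Rightarrow> real"
  assumes summ: "(\<lambda>(i, j). \<bar>R i j\<bar>) summable_on (UNIV :: (int \<times> int) set)"
begin

lemma inj_bound:
  assumes "finite F" "inj_on g F"
  shows "(\<Sum>x\<in>F. \<bar>R (fst (g x)) (snd (g x))\<bar>) \<le> (\<Sum>\<^sub>\<infinity>(i, j)\<in>UNIV. \<bar>R i j\<bar>)"
proof -
  have "(\<Sum>x\<in>F. \<bar>R (fst (g x)) (snd (g x))\<bar>) = (\<Sum>y\<in>g ` F. (\<lambda>(i, j). \<bar>R i j\<bar>) y)"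
    by (subst sum.reindex[OF assms(2)]) (simp add: case_prod_beta o_def)
  also have "\<dots> \<le> (\<Sum>\<^sub>\<infinity>(i, j)\<in>UNIV. \<bar>R i j\<bar>)"
    by (rule finite_sum_le_infsum[OF summ]) (use assms(1) in auto)
  finally show ?thesis .
qed

lemma T_nonneg: "(\<Sum>\<^sub>\<infinity>(i, j)\<in>UNIV. \<bar>R i j\<bar>) \<ge> 0"
  using inj_bound[of "{}" id] by simp

lemma row1: "(\<Sum>j\<in>{1..N}. \<bar>R (int j - a) b\<bar>) \<le> (\<Sum>\<^sub>\<infinity>(i, j)\<in>UNIV. \<bar>R i j\<bar>)"
  using inj_bound[of "{1..N}" "\<lambda>j. (int j - a, b)"] by (simp add: inj_on_def)

lemma row2: "(\<Sum>j\<in>{1..N}. \<bar>R b (int j - a)\<bar>) \<le> (\<Sum>\<^sub>\<infinity>(i, j)\<in>UNIV. \<bar>R i j\<bar>)"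
  using inj_bound[of "{1..N}" "\<lambda>j. (b, int j - a)"] by (simp add: inj_on_def)

lemma sq1: "(\<Sum>l\<in>{1..N}. \<Sum>j\<in>{1..N}. \<bar>R (int j - a) (int l - b)\<bar>) \<le> (\<Sum>\<^sub>\<infinity>(i, j)\<in>UNIV. \<bar>R i j\<bar>)"
  using inj_bound[of "{1..N} \<times> {1..N}" "\<lambda>(l,j). (int j - a, int l - b)"]
  by (simp add: inj_on_def sum.cartesian_product case_prod_beta)

lemma sq2: "(\<Sum>l\<in>{1..N}. \<Sum>j\<in>{1..N}. \<bar>R (int l - a) (int j - b)\<bar>) \<le> (\<Sum>\<^sub>\<infinity>(i, j)\<in>UNIV. \<bar>R i j\<bar>)"
  using inj_bound[of "{1..N} \<times> {1..N}" "\<lambda>(l,j). (int l - a, int j - b)"]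
  by (simp add: inj_on_def sum.cartesian_product case_prod_beta)

lemma sq3: "(\<Sum>i\<in>{1..N}. \<Sum>j\<in>{1..N}. \<bar>R (a - int i) (int j - b)\<bar>) \<le> (\<Sum>\<^sub>\<infinity>(i, j)\<in>UNIV. \<bar>R i j\<bar>)"
  using inj_bound[of "{1..N} \<times> {1..N}" "\<lambda>(i,j). (a - int i, int j - b)"]
  by (simp add: inj_on_def sum.cartesian_product case_prod_beta)

lemma sq4: "(\<Sum>i\<in>{1..N}. \<Sum>j\<in>{1..N}. \<bar>R (int j - b) (a - int i)\<bar>) \<le> (\<Sum>\<^sub>\<infinity>(i, j)\<in>UNIV. \<bar>R i j\<bar>)"
  using inj_bound[of "{1..N} \<times> {1..N}" "\<lambda>(i,j). (int j - b, a - int i)"]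
  by (simp add: inj_on_def sum.cartesian_product case_prod_beta)

lemma abs_ccf_le: "\<bar>ccf R N k l\<bar> \<le> (\<Sum>i\<in>{1..N}. \<Sum>j\<in>{1..N}.
   \<bar>R (int j - int i) (int l - int k)\<bar> + \<bar>R (int l - int i) (int j - int k)\<bar> +
   \<bar>R (int j - int k) (int l - int i)\<bar> + \<bar>R (int l - int k) (int j - int i)\<bar>)"
  unfolding ccf_def
  apply (rule order.trans[OF sum_abs])
  apply (rule sum_mono)
  apply (rule order.trans[OF sum_abs])
  apply (rule sum_mono)
  apply linarith
  done

lemma ccf_bound: "\<bar>ccf R N k l\<bar> \<le> 4 * real N * (\<Sum>\<^sub>\<infinity>(i, j)\<in>UNIV. \<bar>R i j\<bar>)"
proof -
  let ?T = "(\<Sum>\<^sub>\<infinity>(i, j)\<in>UNIV. \<bar>R i j\<bar>)"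
  have "\<bar>ccf R N k l\<bar> \<le> (\<Sum>i\<in>{1..N}. \<Sum>j\<in>{1..N}.
   \<bar>R (int j - int i) (int l - int k)\<bar> + \<bar>R (int l - int i) (int j - int k)\<bar> +
   \<bar>R (int j - int k) (int l - int i)\<bar> + \<bar>R (int l - int k) (int j - int i)\<bar>)" by (rule abs_ccf_le)
  also have "\<dots> \<le> (\<Sum>i\<in>{1..N}. 4 * ?T)"
  proof (rule sum_mono)
    fix i assume "i \<in> {1..N}"
    have "(\<Sum>j\<in>{1..N}.
       \<bar>R (int j - int i) (int l - int k)\<bar> + \<bar>R (int l - int i) (int j - int k)\<bar> +
       \<bar>R (int j - int k) (int l - int i)\<bar> + \<bar>R (int l - int k) (int j - int i)\<bar>) =
       (\<Sum>j\<in>{1..N}. \<bar>R (int j - int i) (int l - int k)\<bar>) + (\<Sum>j\<in>{1..N}. \<bar>R (int l - int i) (int j - int k)\<bar>) +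
       (\<Sum>j\<in>{1..N}. \<bar>R (int j - int k) (int l - int i)\<bar>) + (\<Sum>j\<in>{1..N}. \<bar>R (int l - int k) (int j - int i)\<bar>)"
      by (simp add: sum.distrib)
    also have "\<dots> \<le> ?T + ?T + ?T + ?T"
      by (intro add_mono row1 row2)
    finally show "(\<Sum>j\<in>{1..N}.
       \<bar>R (int j - int i) (int l - int k)\<bar> + \<bar>R (int l - int i) (int j - int k)\<bar> +
       \<bar>R (int j - int k) (int l - int i)\<bar> + \<bar>R (int l - int k) (int j - int i)\<bar>) \<le> 4 * ?T" by simp
  qed
  also have "\<dots> = 4 * real N * ?T" by simp
  finally show ?thesis .
qed

lemma ccf_sum_bound: "(\<Sum>k\<in>{1..N}. \<Sum>l\<in>{1..N}. \<bar>ccf R N k l\<bar>) \<le> 4 * (real N)^2 * (\<Sum>\<^sub>\<infinity>(i, j)\<in>UNIV. \<bar>R i j\<bar>)"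
proof -
  let ?T = "(\<Sum>\<^sub>\<infinity>(i, j)\<in>UNIV. \<bar>R i j\<bar>)"
  let ?h = "\<lambda>k l i j. \<bar>R (int j - int i) (int l - int k)\<bar> + \<bar>R (int l - int i) (int j - int k)\<bar> +
   \<bar>R (int j - int k) (int l - int i)\<bar> + \<bar>R (int l - int k) (int j - int i)\<bar>"
  have "(\<Sum>k\<in>{1..N}. \<Sum>l\<in>{1..N}. \<bar>ccf R N k l\<bar>) \<le> (\<Sum>k\<in>{1..N}. \<Sum>l\<in>{1..N}. \<Sum>i\<in>{1..N}. \<Sum>j\<in>{1..N}. ?h k l i j)"
    by (intro sum_mono abs_ccf_le)
  also have "\<dots> = (\<Sum>k\<in>{1..N}. \<Sum>i\<in>{1..N}. \<Sum>l\<in>{1..N}. \<Sum>j\<in>{1..N}. ?h k l i j)"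
    by (rule sum.cong[OF refl]) (rule sum.swap)
  also have "\<dots> \<le> (\<Sum>k\<in>{1..N}. \<Sum>i\<in>{1..N}. 4 * ?T)"
  proof (intro sum_mono)
    fix k i
    have "(\<Sum>l\<in>{1..N}. \<Sum>j\<in>{1..N}. ?h k l i j) =
      (\<Sum>l\<in>{1..N}. \<Sum>j\<in>{1..N}. \<bar>R (int j - int i) (int l - int k)\<bar>) +
      (\<Sum>l\<in>{1..N}. \<Sum>j\<in>{1..N}. \<bar>R (int l - int i) (int j - int k)\<bar>) +
      (\<Sum>l\<in>{1..N}. \<Sum>j\<in>{1..N}. \<bar>R (int j - int k) (int l - int i)\<bar>) +
      (\<Sum>l\<in>{1..N}. \<Sum>j\<in>{1..N}. \<bar>R (int l - int k) (int j - int i)\<bar>)"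
      by (simp add: sum.distrib)
    also have "\<dots> \<le> ?T + ?T + ?T + ?T"
      by (intro add_mono sq1 sq2)
    finally show "(\<Sum>l\<in>{1..N}. \<Sum>j\<in>{1..N}. ?h k l i j) \<le> 4 * ?T" by simp
  qed
  also have "\<dots> = 4 * (real N)^2 * ?T" by (simp add: power2_eq_square)
  finally show ?thesis .
qed

lemma ccf_sq_bound: "(\<Sum>k\<in>{1..N}. \<Sum>l\<in>{1..N}. (ccf R N k l)^2) \<le> 16 * (real N)^3 * (\<Sum>\<^sub>\<infinity>(i, j)\<in>UNIV. \<bar>R i j\<bar>)^2"
proof -
  let ?T = "(\<Sum>\<^sub>\<infinity>(i, j)\<in>UNIV. \<bar>R i j\<bar>)"
  have "(\<Sum>k\<in>{1..N}. \<Sum>l\<in>{1..N}. (ccf R N k l)^2) \<le> (\<Sum>k\<in>{1..N}. \<Sum>l\<in>{1..N}. (4 * real N * ?T) * \<bar>ccf R N k l\<bar>)"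
  proof (intro sum_mono)
    fix k l
    have "(ccf R N k l)^2 = \<bar>ccf R N k l\<bar> * \<bar>ccf R N k l\<bar>" by (simp add: power2_eq_square)
    also have "\<dots> \<le> (4 * real N * ?T) * \<bar>ccf R N k l\<bar>" by (intro mult_right_mono ccf_bound) simp
    finally show "(ccf R N k l)^2 \<le> (4 * real N * ?T) * \<bar>ccf R N k l\<bar>" .
  qed
  also have "\<dots> = (4 * real N * ?T) * (\<Sum>k\<in>{1..N}. \<Sum>l\<in>{1..N}. \<bar>ccf R N k l\<bar>)"
    by (simp add: sum_distrib_left)
  also have "\<dots> \<le> (4 * real N * ?T) * (4 * (real N)^2 * ?T)"
    by (intro mult_left_mono ccf_sum_bound) (use T_nonneg in simp)
  also have "\<dots> = 16 * (real N)^3 * ?T^2" by (simp add: power2_eq_square power3_eq_cube)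
  finally show ?thesis .
qed

lemma mean_approx: "\<bar>(\<Sum>k\<in>{1..N}. ccf R N k k) - real N * (\<Sum>i\<in>{1..N}. \<Sum>j\<in>{1..N}. R (int j - int i) 0 + R 0 (int j - int i))\<bar>
   \<le> 2 * real N * (\<Sum>\<^sub>\<infinity>(i, j)\<in>UNIV. \<bar>R i j\<bar>)"
proof -
  let ?T = "(\<Sum>\<^sub>\<infinity>(i, j)\<in>UNIV. \<bar>R i j\<bar>)"
  have e: "ccf R N k k = (\<Sum>i\<in>{1..N}. \<Sum>j\<in>{1..N}. R (int j - int i) 0 + R 0 (int j - int i)) +
     (\<Sum>i\<in>{1..N}. \<Sum>j\<in>{1..N}. R (int k - int i) (int j - int k) + R (int j - int k) (int k - int i))" for k
    unfolding ccf_def by (simp add: sum.distrib[symmetric] algebra_simps)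
  have "(\<Sum>k\<in>{1..N}. ccf R N k k) - real N * (\<Sum>i\<in>{1..N}. \<Sum>j\<in>{1..N}. R (int j - int i) 0 + R 0 (int j - int i))
     = (\<Sum>k\<in>{1..N}. \<Sum>i\<in>{1..N}. \<Sum>j\<in>{1..N}. R (int k - int i) (int j - int k) + R (int j - int k) (int k - int i))"
    by (simp add: e sum.distrib)
  also have "\<bar>\<dots>\<bar> \<le> (\<Sum>k\<in>{1..N}. 2 * ?T)"
  proof (rule order.trans[OF sum_abs], rule sum_mono)
    fix k
    have "\<bar>\<Sum>i\<in>{1..N}. \<Sum>j\<in>{1..N}. R (int k - int i) (int j - int k) + R (int j - int k) (int k - int i)\<bar>
      \<le> (\<Sum>i\<in>{1..N}. \<Sum>j\<in>{1..N}. \<bar>R (int k - int i) (int j - int k)\<bar> + \<bar>R (int j - int k) (int k - int i)\<bar>)"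
      apply (rule order.trans[OF sum_abs])
      apply (rule sum_mono)
      apply (rule order.trans[OF sum_abs])
      apply (rule sum_mono)
      apply linarith
      done
    also have "\<dots> = (\<Sum>i\<in>{1..N}. \<Sum>j\<in>{1..N}. \<bar>R (int k - int i) (int j - int k)\<bar>) +
        (\<Sum>i\<in>{1..N}. \<Sum>j\<in>{1..N}. \<bar>R (int j - int k) (int k - int i)\<bar>)"
      by (simp add: sum.distrib)
    also have "\<dots> \<le> ?T + ?T" by (intro add_mono sq3 sq4)
    finally show "\<bar>\<Sum>i\<in>{1..N}. \<Sum>j\<in>{1..N}. R (int k - int i) (int j - int k) + R (int j - int k) (int k - int i)\<bar> \<le> 2 * ?T"
      by simp
  qed
  also have "\<dots> = 2 * real N * ?T" by simp
  finally show ?thesis .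
qed

end


context gsetup begin

lemma triple: "(\<Sum>i\<in>{1..N}. \<Sum>j\<in>{1..N}. \<Sum>k\<in>{1..N}.
                 ((Z (int i, int k) \<omega> - \<theta>) + (Z (int k, int i) \<omega> - \<theta>)) *
                 ((Z (int k, int j) \<omega> - \<theta>) + (Z (int j, int k) \<omega> - \<theta>))) = QQ N \<omega>"
proof -
  define a where "a i k = (Z (int i, int k) \<omega> - \<theta>) + (Z (int k, int i) \<omega> - \<theta>)" for i k :: nat
  have "(\<Sum>i\<in>{1..N}. \<Sum>j\<in>{1..N}. \<Sum>k\<in>{1..N}.
                 ((Z (int i, int k) \<omega> - \<theta>) + (Z (int k, int i) \<omega> - \<theta>)) *
                 ((Z (int k, int j) \<omega> - \<theta>) + (Z (int j, int k) \<omega> - \<theta>))) =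
        (\<Sum>i\<in>{1..N}. \<Sum>j\<in>{1..N}. \<Sum>k\<in>{1..N}. a i k * a j k)"
    by (intro sum.cong refl) (simp add: a_def ac_simps)
  also have "\<dots> = (\<Sum>i\<in>{1..N}. \<Sum>k\<in>{1..N}. \<Sum>j\<in>{1..N}. a i k * a j k)"
    by (rule sum.cong[OF refl]) (rule sum.swap)
  also have "\<dots> = (\<Sum>k\<in>{1..N}. \<Sum>i\<in>{1..N}. \<Sum>j\<in>{1..N}. a i k * a j k)"
    by (rule sum.swap)
  also have "\<dots> = QQ N \<omega>"
    unfolding QQ_def SS_def power2_eq_square sum_product a_def ..
  finally show ?thesis .
qed

end



theorem lemma3:
  fixes M :: "'a measure" and Z :: "int \<times> int \<Rightarrow> 'a \<Rightarrow> real"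
    and \<theta> :: real and R :: "int \<Rightarrow> int \<Rightarrow> real"
  assumes "prob_space M"
    and "\<theta> > 0"
    and "gaussian_process M Z"
    and "stationary2 M Z"
    and "\<And>i j. prob_space.expectation M (Z (i, j)) = \<theta>"
    and "\<And>i j. R i j = prob_space.expectation M (\<lambda>\<omega>. (Z (0, 0) \<omega> - \<theta>) * (Z (i, j) \<omega> - \<theta>))"
    and "(\<lambda>(i, j). \<bar>R i j\<bar>) summable_on (UNIV :: (int \<times> int) set)"
    and "(\<Sum>\<^sub>\<infinity>(i, j)\<in>(UNIV :: (int \<times> int) set). R i j) \<noteq> 0"
  shows "conv_in_prob M
           (\<lambda>N \<omega>. (1 / (real N)^2) *
              (\<Sum>i\<in>{1..N}. \<Sum>j\<in>{1..N}. \<Sum>k\<in>{1..N}.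
                 ((Z (int i, int k) \<omega> - \<theta>) + (Z (int k, int i) \<omega> - \<theta>)) *
                 ((Z (int k, int j) \<omega> - \<theta>) + (Z (int j, int k) \<omega> - \<theta>))))
           (2 * ((1 / (2 * \<theta>)) * (\<Sum>\<^sub>\<infinity>i\<in>(UNIV :: int set). R i 0 + R 0 i)) * \<theta>)"
proof -
  interpret gsetup M Z \<theta> R
    by (intro gsetup.intro gsetup_axioms.intro assms(1,3,4,5,6))
  have summ: "(\<lambda>(i, j). \<bar>R i j\<bar>) summable_on (UNIV :: (int \<times> int) set)" by (rule assms(7))
  define T where "T = (\<Sum>\<^sub>\<infinity>(i, j)\<in>(UNIV :: (int \<times> int) set). \<bar>R i j\<bar>)"
  define f where "f m = R m 0 + R 0 m" for m
  define F where "F = (\<Sum>\<^sub>\<infinity>i\<in>(UNIV :: int set). R i 0 + R 0 i)"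
  have T0: "T \<ge> 0" unfolding T_def by (rule T_nonneg[OF summ])
  have target: "2 * ((1 / (2 * \<theta>)) * F) * \<theta> = F" using assms(2) by simp
  have sR: "(\<lambda>p. R (fst p) (snd p)) summable_on (UNIV :: (int \<times> int) set)"
  proof (rule abs_summable_summable)
    show "(\<lambda>p. norm (R (fst p) (snd p))) summable_on UNIV"
    proof -
      have e: "(\<lambda>(i, j). \<bar>R i j\<bar>) = (\<lambda>p. norm (R (fst p) (snd p)))" by (rule ext) (simp add: split_beta)
      show ?thesis using summ unfolding e .
    qed
  qed
  have s1: "(\<lambda>m. R m 0) summable_on (UNIV :: int set)"
  proof -
    have "(\<lambda>p. R (fst p) (snd p)) summable_on (range (\<lambda>m. (m, 0::int)))"
      by (rule summable_on_subset_banach[OF sR]) simp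
    then show ?thesis by (subst (asm) summable_on_reindex) (auto simp: inj_on_def o_def)
  qed
  have s2: "(\<lambda>m. R 0 m) summable_on (UNIV :: int set)"
  proof -
    have "(\<lambda>p. R (fst p) (snd p)) summable_on (range (\<lambda>m. (0::int, m)))"
      by (rule summable_on_subset_banach[OF sR]) simp
    then show ?thesis by (subst (asm) summable_on_reindex) (auto simp: inj_on_def o_def)
  qed
  have hs: "(f has_sum F) UNIV"
  proof -
    have "f summable_on UNIV" unfolding f_def by (rule summable_on_add[OF s1 s2])
    then show ?thesis unfolding F_def f_def[symmetric] by (rule has_sum_infsum)
  qed
  have fbd: "\<bar>\<Sum>m\<in>D. f m\<bar> \<le> 2 * T" if D: "finite D" for D
  proof -
    have "\<bar>\<Sum>m\<in>D. f m\<bar> \<le> (\<Sum>m\<in>D. \<bar>R (fst (m, 0::int)) (snd (m, 0::int))\<bar>) + (\<Sum>m\<in>D. \<bar>R (fst (0::int, m)) (snd (0::int, m))\<bar>)"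
      unfolding f_def by (rule order.trans[OF sum_abs]) (simp add: sum.distrib[symmetric] sum_mono)
    also have "\<dots> \<le> T + T" unfolding T_def
      by (intro add_mono inj_bound[OF summ D]) (auto simp: inj_on_def)
    finally show ?thesis by simp
  qed
  define DN where "DN N = (\<Sum>i\<in>{1..N}. \<Sum>j\<in>{1..N}. f (int j - int i))" for N :: nat
  have ces: "(\<lambda>N. DN N / real N) \<longlonglongrightarrow> F"
    unfolding DN_def by (rule cesaro_int[OF hs fbd])
  define EQ where "EQ N = expectation (QQ N)" for N
  have EQf: "EQ N = (\<Sum>k\<in>{1..N}. ccf R N k k)" for N
    unfolding EQ_def E_QQ ccf_def[symmetric] cc_formula ..
  have EQapp: "\<bar>EQ N - real N * DN N\<bar> \<le> 2 * real N * T" for N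
    unfolding EQf DN_def f_def T_def by (rule mean_approx[OF summ])
  have mean_lim: "(\<lambda>N. EQ N / (real N)^2) \<longlonglongrightarrow> F"
  proof -
    have d: "(\<lambda>N. EQ N / (real N)^2 - DN N / real N) \<longlonglongrightarrow> 0"
    proof (rule tendsto_sandwich[where f="\<lambda>N. - (2 * T / real N)" and h="\<lambda>N. 2 * T / real N"])
      have "(\<lambda>N. 2 * T / real N) \<longlonglongrightarrow> 0"
        by (intro tendsto_divide_0[OF tendsto_const] filterlim_at_top_imp_at_infinity[OF filterlim_real_sequentially])
      then show "(\<lambda>N. 2 * T / real N) \<longlonglongrightarrow> 0" "(\<lambda>N. - (2 * T / real N)) \<longlonglongrightarrow> 0"
        using tendsto_minus[of "\<lambda>N. 2 * T / real N" 0] by auto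
      have "\<bar>EQ N / (real N)^2 - DN N / real N\<bar> \<le> 2 * T / real N" if N: "N \<ge> 1" for N
      proof -
        have "EQ N / (real N)^2 - DN N / real N = (EQ N - real N * DN N) / (real N)^2"
          using N by (simp add: field_simps power2_eq_square)
        then have "\<bar>EQ N / (real N)^2 - DN N / real N\<bar> = \<bar>EQ N - real N * DN N\<bar> / (real N)^2"
          by (simp add: abs_divide)
        also have "\<dots> \<le> (2 * real N * T) / (real N)^2"
          by (intro divide_right_mono EQapp) simp
        also have "\<dots> = 2 * T / real N" using N by (simp add: power2_eq_square)
        finally show ?thesis .
      qed
      note ab = this
      show "eventually (\<lambda>N. - (2 * T / real N) \<le> EQ N / (real N)^2 - DN N / real N) sequentially"
        unfolding eventually_sequentially
      proof (intro exI[of _ 1] allI impI)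
        fix N :: nat assume "N \<ge> 1"
        from ab[OF this] show "- (2 * T / real N) \<le> EQ N / (real N)^2 - DN N / real N"
          unfolding abs_le_iff by linarith
      qed
      show "eventually (\<lambda>N. EQ N / (real N)^2 - DN N / real N \<le> 2 * T / real N) sequentially"
        unfolding eventually_sequentially
      proof (intro exI[of _ 1] allI impI)
        fix N :: nat assume "N \<ge> 1"
        from ab[OF this] show "EQ N / (real N)^2 - DN N / real N \<le> 2 * T / real N"
          unfolding abs_le_iff by linarith
      qed
    qed
    have "(\<lambda>N. (EQ N / (real N)^2 - DN N / real N) + DN N / real N) \<longlonglongrightarrow> 0 + F"
      by (rule tendsto_add[OF d ces])
    then show ?thesis by simp
  qed
  define SC where "SC N = (\<Sum>k\<in>{1..N}. \<Sum>l\<in>{1..N}. (cc N k l)^2)" for N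
  have SCb: "SC N \<le> 16 * (real N)^3 * T^2" for N
    unfolding SC_def T_def cc_formula ccf_def[symmetric] by (rule ccf_sq_bound[OF summ])
  have SC0: "SC N \<ge> 0" for N unfolding SC_def by (intro sum_nonneg) simp
  define Y where "Y N \<omega> = (1 / (real N)^2) * QQ N \<omega>" for N \<omega>
  define V where "V N = expectation (\<lambda>\<omega>. (Y N \<omega> - F)^2)" for N
  have Yint: "integrable M (\<lambda>\<omega>. (Y N \<omega> - F)^2)" for N
  proof -
    have "(\<lambda>\<omega>. (Y N \<omega> - F)^2) = (\<lambda>\<omega>. (1 / (real N)^2)^2 * (QQ N \<omega>)^2 + (- 2 * F / (real N)^2) * QQ N \<omega> + F^2)"
      unfolding Y_def by (auto simp: power2_eq_square algebra_simps)
    then show ?thesis using QQ2_int QQ_int by simp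
  qed
  have Veq: "V N = ((1 / (real N)^2) * EQ N - F)^2 + 2 * (1 / (real N)^2)^2 * SC N" for N
  proof -
    have "(\<lambda>\<omega>. (Y N \<omega> - F)^2) = (\<lambda>\<omega>. (1 / (real N)^2)^2 * (QQ N \<omega>)^2 + (- 2 * F / (real N)^2) * QQ N \<omega> + F^2)"
      unfolding Y_def by (auto simp: power2_eq_square algebra_simps)
    then have "V N = (1 / (real N)^2)^2 * expectation (\<lambda>\<omega>. (QQ N \<omega>)^2) + (- 2 * F / (real N)^2) * EQ N + F^2"
      unfolding V_def EQ_def using QQ2_int QQ_int by (simp add: prob_space.prob_space[OF assms(1)])
    also have "\<dots> = ((1 / (real N)^2) * EQ N - F)^2 + 2 * (1 / (real N)^2)^2 * SC N"
      unfolding E_QQ2 SC_def EQ_def[symmetric] by (simp add: power2_eq_square algebra_simps)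
    finally show ?thesis .
  qed
  have Vlim: "V \<longlonglongrightarrow> 0"
  proof -
    have a: "(\<lambda>N. ((1 / (real N)^2) * EQ N - F)^2) \<longlonglongrightarrow> 0"
    proof -
      have "(\<lambda>N. (1 / (real N)^2) * EQ N - F) \<longlonglongrightarrow> F - F"
        using tendsto_diff[OF mean_lim tendsto_const[of F]] by simp
      then have "(\<lambda>N. ((1 / (real N)^2) * EQ N - F)^2) \<longlonglongrightarrow> (F - F)^2" by (rule tendsto_power)
      then show ?thesis by simp
    qed
    have b: "(\<lambda>N. 2 * (1 / (real N)^2)^2 * SC N) \<longlonglongrightarrow> 0"
    proof (rule tendsto_sandwich[where f="\<lambda>N. 0" and h="\<lambda>N. 32 * T^2 / real N"])
      show "eventually (\<lambda>N. 0 \<le> 2 * (1 / (real N)^2)^2 * SC N) sequentially"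
        using SC0 by simp
      have "2 * (1 / (real N)^2)^2 * SC N \<le> 32 * T^2 / real N" if N: "N \<ge> 1" for N
      proof -
        have "2 * (1 / (real N)^2)^2 * SC N \<le> 2 * (1 / (real N)^2)^2 * (16 * (real N)^3 * T^2)"
          by (intro mult_left_mono SCb) simp
        also have "\<dots> = 32 * T^2 / real N" using N by (simp add: field_simps power2_eq_square power3_eq_cube)
        finally show ?thesis .
      qed
      then show "eventually (\<lambda>N. 2 * (1 / (real N)^2)^2 * SC N \<le> 32 * T^2 / real N) sequentially"
        unfolding eventually_sequentially by auto
      show "(\<lambda>N. 0) \<longlonglongrightarrow> (0::real)" by simp
      show "(\<lambda>N. 32 * T^2 / real N) \<longlonglongrightarrow> 0"
        by (intro tendsto_divide_0[OF tendsto_const] filterlim_at_top_imp_at_infinity[OF filterlim_real_sequentially])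
    qed
    show ?thesis unfolding Veq[abs_def] using tendsto_add[OF a b] by simp
  qed
  have Ymeas: "Y N \<in> borel_measurable M" for N
    unfolding Y_def[abs_def] QQ_def[abs_def] SS_def[abs_def] by measurable
  show ?thesis
    unfolding conv_in_prob_def target F_def[symmetric]
  proof (intro allI impI)
    fix \<epsilon> :: real assume ep: "\<epsilon> > 0"
    have bnd: "measure M {\<omega> \<in> space M. \<bar>Y N \<omega> - F\<bar> > \<epsilon>} \<le> V N / \<epsilon>^2" for N
    proof -
      have "measure M {\<omega> \<in> space M. \<bar>Y N \<omega> - F\<bar> > \<epsilon>} \<le> measure M {\<omega> \<in> space M. (Y N \<omega> - F)^2 \<ge> \<epsilon>^2}"
      proof (rule finite_measure_mono)
        show "{\<omega> \<in> space M. \<bar>Y N \<omega> - F\<bar> > \<epsilon>} \<subseteq> {\<omega> \<in> space M. (Y N \<omega> - F)^2 \<ge> \<epsilon>^2}"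
        proof safe
          fix \<omega> assume "\<bar>Y N \<omega> - F\<bar> > \<epsilon>"
          then have "\<epsilon>^2 \<le> \<bar>Y N \<omega> - F\<bar>^2" using ep by (intro power_mono) auto
          then show "(Y N \<omega> - F)^2 \<ge> \<epsilon>^2" by simp
        qed
        show "{\<omega> \<in> space M. (Y N \<omega> - F)^2 \<ge> \<epsilon>^2} \<in> sets M" using Ymeas[of N] by measurable
      qed
      also have "\<dots> \<le> V N / \<epsilon>^2" unfolding V_def
        by (rule integral_Markov_inequality_measure[OF Yint, of "space M"]) (use ep in auto)
      finally show ?thesis .
    qed
    have "(\<lambda>N. measure M {\<omega> \<in> space M. \<bar>Y N \<omega> - F\<bar> > \<epsilon>}) \<longlonglongrightarrow> 0"
    proof (rule tendsto_sandwich[where f="\<lambda>N. 0" and h="\<lambda>N. V N / \<epsilon>^2"])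
      show "eventually (\<lambda>N. 0 \<le> measure M {\<omega> \<in> space M. \<bar>Y N \<omega> - F\<bar> > \<epsilon>}) sequentially" by simp
      show "eventually (\<lambda>N. measure M {\<omega> \<in> space M. \<bar>Y N \<omega> - F\<bar> > \<epsilon>} \<le> V N / \<epsilon>^2) sequentially"
        using bnd by simp
      show "(\<lambda>N. 0) \<longlonglongrightarrow> (0::real)" by simp
      show "(\<lambda>N. V N / \<epsilon>^2) \<longlonglongrightarrow> 0" using tendsto_divide[OF Vlim tendsto_const[of "\<epsilon>^2"]] ep by simp
    qed
    then show "(\<lambda>N. measure M {\<omega> \<in> space M. \<bar>1 / (real N)\<^sup>2 *
              (\<Sum>i\<in>{1..N}. \<Sum>j\<in>{1..N}. \<Sum>k\<in>{1..N}.
                 ((Z (int i, int k) \<omega> - \<theta>) + (Z (int k, int i) \<omega> - \<theta>)) *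
                 ((Z (int k, int j) \<omega> - \<theta>) + (Z (int j, int k) \<omega> - \<theta>))) - F\<bar> > \<epsilon>}) \<longlonglongrightarrow> 0"
      unfolding triple Y_def by simp
  qed
qed


end
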